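(* In the setting of the context, suppose the algorithm described there terminates after $N$ steps, i.e. $CB^{(N)}=0$. Then all entries of the returned matrix $B$ (the non-zero columns of $B^{(N)}$) are non-negative.
   Context: Multi-patch setting: $\Omega\subset\mathbb{R}^2$ is the union of closures of $K$ pairwise disjoint patches $\Omega_k=G_k((0,1)^2)$; on each patch there is a local basis $\Phi^{(k)}=(\phi_i^{(k)})_{i=1}^{n^{(k)}}$ obtained by mapping tensor-product B-splines (degree $p$, open knot vectors) via $G_k$. Any two patches sharing an edge $\Gamma_{k,\ell}=\partial\Omega_k\cap\partial\Omega_\ell$ (of positive length) have nested trace spaces; the closures of two patches intersect in the empty set, a vertex of at least one of them, or an edge of at least one of them; and any two patches meeting at a T-junction share an edge. Let $n^{(pw)}=\sum_kn^{(k)}$ and index the concatenated coefficient vector $\underline u_h=(\underline u_h^{(1)},\ldots,\underline u_h^{(K)})\in\mathbb{R}^{n^{(pw)}}$. Constraint matrix $C$: for every pair of patches $\Omega_k,\Omega_\ell$ sharing an edge $\Gamma$ with $V_h^{(k)}|_\Gamma\subseteq V_h^{(\ell)}|_\Gamma$, and every $i$ with $\phi_i^{(k)}|_\Gamma\not\equiv0$, write $\phi_i^{(k)}=\sum_jE^{(k,\ell)}_{i,j}\phi_j^{(\ell)}$ on $\Gamma$ with nonnegative coefficients with row sums $1$ (knot insertion); then $C$ has a row representing $u_i^{(k)}-\sum_jE^{(k,\ell)}_{i,j}u_j^{(\ell)}=0$. For a matrix $D$ and row $m$ define $\mathcal F_m(D)=\{n: D_{m,n}\ne0,\ D_{m,n}D_{m,j}\le0\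 \forall j\ne n\}$. Algorithm: $B^{(0)}=I$; for $\nu=1,2,\ldots$ until $CB^{(\nu)}=0$: choose $m_\nu,n_\nu$ with $n_\nu\in\mathcal F_{m_\nu}(CB^{(\nu-1)})$, set $R^{(\nu)}=I-\frac{1}{e_{m_\nu}^\top CB^{(\nu-1)}e_{n_\nu}}e_{n_\nu}e_{m_\nu}^\top CB^{(\nu-1)}$, $B^{(\nu)}=B^{(\nu-1)}R^{(\nu)}$. Return $B$ = the non-zero columns of $B^{(N)}$, $N$ the first index with $CB^{(N)}=0$. *)

theory Defs
  imports "Jordan_Normal_Form.Matrix"
begin

text \<open>Global coefficient indices are 0..<npw; patch p assigns each global index
its patch number (the concatenation of the local coefficient vectors).\<close>

text \<open>Algebraic structure of the constraint matrix C: every row represents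
  u_i - sum_j E_ij u_j = 0, where i belongs to patch k, all j belong to a
  different patch l, the weights E_ij are nonnegative and sum to 1.\<close>
definition constraint_matrix :: "nat \<Rightarrow> (nat \<Rightarrow> nat) \<Rightarrow> real mat \<Rightarrow> bool" where
  "constraint_matrix npw patch C \<longleftrightarrow>
     dim_col C = npw \<and>
     (\<forall>m < dim_row C. \<exists>i l (E :: nat \<Rightarrow> real).
        i < npw \<and> patch i \<noteq> l \<and> C $$ (m, i) = 1 \<and>
        (\<forall>j < npw. patch j = l \<longrightarrow> E j \<ge> 0) \<and>
        (\<Sum>j\<in>{j. j < npw \<and> patch j = l}. E j) = 1 \<and>
        (\<forall>j < npw. j \<noteq> i \<longrightarrow>
            C $$ (m, j) = (if patch j = l then - E j else 0)))"

definition pivot_set :: "real mat \<Rightarrow> nat \<Rightarrow> nat set" where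
  "pivot_set D m = {n. n < dim_col D \<and> D $$ (m, n) \<noteq> 0 \<and>
       (\<forall>j < dim_col D. j \<noteq> n \<longrightarrow> D $$ (m, n) * D $$ (m, j) \<le> 0)}"

definition update_mat :: "nat \<Rightarrow> real mat \<Rightarrow> nat \<Rightarrow> nat \<Rightarrow> real mat" where
  "update_mat npw D m n =
     1\<^sub>m npw - (1 / D $$ (m, n)) \<cdot>\<^sub>m
       mat npw npw (\<lambda>(i, j). if i = n then D $$ (m, j) else 0)"

primrec alg_B :: "nat \<Rightarrow> real mat \<Rightarrow> (nat \<Rightarrow> nat) \<Rightarrow> (nat \<Rightarrow> nat) \<Rightarrow> nat \<Rightarrow> real mat" where
  "alg_B npw C ms ns 0 = 1\<^sub>m npw"
| "alg_B npw C ms ns (Suc k) =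
     alg_B npw C ms ns k * update_mat npw (C * alg_B npw C ms ns k) (ms (Suc k)) (ns (Suc k))"

end

theory Submission
  imports Defs
begin

lemma alg_B_dim: "alg_B npw C ms ns k \<in> carrier_mat npw npw"
  by (induction k) (auto simp: update_mat_def)

lemma update_nonneg:
  assumes "n \<in> pivot_set D m" "dim_col D = npw" "i < npw" "j < npw"
  shows "update_mat npw D m n $$ (i, j) \<ge> 0"
proof -
  have dn: "D $$ (m, n) \<noteq> 0" using assms(1) by (simp add: pivot_set_def)
  have e: "update_mat npw D m n $$ (i, j) =
     (if i = j then 1 else 0) - (1 / D $$ (m, n)) * (if i = n then D $$ (m, j) else 0)"
    using assms(3,4) by (simp add: update_mat_def)
  show ?thesis
  proof (cases "i = n")
    case False then show ?thesis using e by simp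
  next
    case True
    show ?thesis
    proof (cases "j = n")
      case True with \<open>i = n\<close> show ?thesis using e dn by simp
    next
      case False
      have p: "D $$ (m, n) * D $$ (m, j) \<le> 0"
        using assms(1,2,4) False by (simp add: pivot_set_def)
      have "D $$ (m, j) / D $$ (m, n) = D $$ (m, n) * D $$ (m, j) / (D $$ (m, n))^2"
        using dn by (simp add: power2_eq_square field_simps)
      also have "\<dots> \<le> 0" using p by (simp add: divide_nonpos_nonneg)
      finally show ?thesis using e True False by simp
    qed
  qed
qed

lemma alg_B_nonneg:
  assumes "\<And>\<nu>. 1 \<le> \<nu> \<Longrightarrow> \<nu> \<le> N \<Longrightarrow>
           ns \<nu> \<in> pivot_set (C * alg_B npw C ms ns (\<nu> - 1)) (ms \<nu>)"
  shows "k \<le> N \<Longrightarrow> i < npw \<Longrightarrow> j < npw \<Longrightarrow> alg_B npw C ms ns k $$ (i, j) \<ge> 0"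
proof (induction k arbitrary: i j)
  case 0 then show ?case by simp
next
  case (Suc k)
  let ?B = "alg_B npw C ms ns k"
  let ?R = "update_mat npw (C * ?B) (ms (Suc k)) (ns (Suc k))"
  have B: "?B \<in> carrier_mat npw npw" by (rule alg_B_dim)
  have R: "?R \<in> carrier_mat npw npw" unfolding update_mat_def by (intro minus_carrier_mat smult_carrier_mat one_carrier_mat mat_carrier)
  have piv: "ns (Suc k) \<in> pivot_set (C * ?B) (ms (Suc k))"
    using assms[of "Suc k"] Suc.prems by simp
  have dc: "dim_col (C * ?B) = npw" using B by simp
  have "(?B * ?R) $$ (i, j) = (\<Sum>l<npw. ?B $$ (i, l) * ?R $$ (l, j))"
    using B R Suc.prems by (simp add: scalar_prod_def atLeast0LessThan)
  also have "\<dots> \<ge> 0"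
    apply (rule sum_nonneg)
    apply (rule mult_nonneg_nonneg)
    using Suc.IH Suc.prems apply simp
    using update_nonneg[OF piv dc] Suc.prems apply simp
    done
  finally show ?case by simp
qed

theorem mainTheorem5:
  fixes npw N :: nat and patch :: "nat \<Rightarrow> nat" and C :: "real mat"
    and ms ns :: "nat \<Rightarrow> nat"
  assumes "constraint_matrix npw patch C"
    and "\<And>\<nu>. 1 \<le> \<nu> \<Longrightarrow> \<nu> \<le> N \<Longrightarrow> ms \<nu> < dim_row C"
    and "\<And>\<nu>. 1 \<le> \<nu> \<Longrightarrow> \<nu> \<le> N \<Longrightarrow>
           ns \<nu> \<in> pivot_set (C * alg_B npw C ms ns (\<nu> - 1)) (ms \<nu>)"
    and "\<And>\<nu>. \<nu> < N \<Longrightarrow> C * alg_B npw C ms ns \<nu> \<noteq> 0\<^sub>m (dim_row C) npw"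
    and "C * alg_B npw C ms ns N = 0\<^sub>m (dim_row C) npw"
  shows "\<forall>j < npw. col (alg_B npw C ms ns N) j \<noteq> 0\<^sub>v npw \<longrightarrow>
           (\<forall>i < npw. alg_B npw C ms ns N $$ (i, j) \<ge> 0)"
  using alg_B_nonneg[OF assms(3)] by auto

end
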